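(* In the setting below, the map $\psi:W\to\mathbb{R}_+^n$, $\psi(w)=(B_1(w),\dots,B_n(w))$, is injective.
   Context: Setting: $T^*$ is a triangulation of a closed surface $S$ with vertex set $T^0$; $\Sigma=S\setminus N(T^0)$ where $N(T^0)$ is a small open regular disjoint neighborhood of $T^0$; $\Sigma$ has boundary components labeled $1,\dots,n$. $T=T^*\cap\Sigma$ is the ideal triangulation with ideal edges $E$ and ideal faces $F$; $ij$ denotes the ideal edge between boundary components $i,j$ and $ijk$ the ideal face adjacent to boundary components $i,j,k$. $\theta_i^f$ is the length of the side of the right-angled hyperbolic hexagon of face $f=ijk$ (pairwise non-adjacent sides of lengths $l_{ij},l_{jk},l_{ki}$) opposite to the side of length $l_{jk}$, i.e. $\cosh\theta_i^f=\frac{\cosh l_{jk}+\cosh l_{ki}\cosh l_{ij}}{\sinh l_{ki}\sinh l_{ij}}$. Fix $l^0\in\mathbb{R}_+^{|E|}$. $W=\{w\in\mathbb{R}^n: w_i+w_j>-\ln\cosh\frac{l^0_{ij}}{2}\ \forall ij\in E\}$ (admissible discrete conformal factors); for $w\in W$, $\cosh\frac{l_{ij}}{2}=e^{w_i+w_j}\cosh\frac{l^0_{ij}}{2}$, and $B_i(w)=\sum_{f\in F_i}\theta_i^f$, where $F_i$ is the set of faces adjacent to boundary component $i$. *)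

theory Defs
  imports "HOL-Analysis.Analysis" "HOL-Library.Multiset"
begin

text \<open>Vertices (= boundary components of Sigma) are 1..n. Each face f in F has three
  corners k = 0,1,2 with vertex fv f k; fe f k is the edge of f opposite to corner k,
  whose endpoints are the corners (k+1) mod 3 and (k+2) mod 3. ends e gives the two
  endpoints of edge e.\<close>

definition closed_triangulation ::
  "nat \<Rightarrow> 'f set \<Rightarrow> 'e set \<Rightarrow> ('f \<Rightarrow> nat \<Rightarrow> nat) \<Rightarrow> ('f \<Rightarrow> nat \<Rightarrow> 'e) \<Rightarrow> ('e \<Rightarrow> nat \<times> nat) \<Rightarrow> bool"
where
  "closed_triangulation n F E fv fe ends \<longleftrightarrow>
     finite F \<and> finite E \<and> F \<noteq> {} \<and>
     (\<forall>f\<in>F. \<forall>k<3. fv f k \<in> {1..n} \<and> fe f k \<in> E \<and>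
        {# fst (ends (fe f k)), snd (ends (fe f k)) #} = {# fv f ((k+1) mod 3), fv f ((k+2) mod 3) #}) \<and>
     (\<forall>e\<in>E. card {(f,k). f \<in> F \<and> k < 3 \<and> fe f k = e} = 2) \<and>
     (\<forall>i\<in>{1..n}. \<exists>f\<in>F. \<exists>k<3. fv f k = i)"

text \<open>Length of the side of a right-angled hyperbolic hexagon opposite to the side of
  length a, where the other two pairwise non-adjacent sides have lengths b, c.\<close>
definition hex_side :: "real \<Rightarrow> real \<Rightarrow> real \<Rightarrow> real" where
  "hex_side a b c = arcosh ((cosh a + cosh b * cosh c) / (sinh b * sinh c))"

definition conf_length :: "('e \<Rightarrow> real) \<Rightarrow> ('e \<Rightarrow> nat \<times> nat) \<Rightarrow> (nat \<Rightarrow> real) \<Rightarrow> 'e \<Rightarrow> real" where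
  "conf_length l0 ends w e =
     2 * arcosh (exp (w (fst (ends e)) + w (snd (ends e))) * cosh (l0 e / 2))"

definition corner_theta ::
  "('f \<Rightarrow> nat \<Rightarrow> 'e) \<Rightarrow> ('e \<Rightarrow> real) \<Rightarrow> ('e \<Rightarrow> nat \<times> nat) \<Rightarrow> (nat \<Rightarrow> real) \<Rightarrow> 'f \<Rightarrow> nat \<Rightarrow> real"
where
  "corner_theta fe l0 ends w f k =
     (let l = conf_length l0 ends w in
      hex_side (l (fe f k)) (l (fe f ((k+1) mod 3))) (l (fe f ((k+2) mod 3))))"

definition Bcurv ::
  "'f set \<Rightarrow> ('f \<Rightarrow> nat \<Rightarrow> nat) \<Rightarrow> ('f \<Rightarrow> nat \<Rightarrow> 'e) \<Rightarrow> ('e \<Rightarrow> real) \<Rightarrow> ('e \<Rightarrow> nat \<times> nat)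
     \<Rightarrow> nat \<Rightarrow> (nat \<Rightarrow> real) \<Rightarrow> real"
where
  "Bcurv F fv fe l0 ends i w =
     (\<Sum>(f,k) \<in> {(f,k). f \<in> F \<and> k < 3 \<and> fv f k = i}. corner_theta fe l0 ends w f k)"

definition admissible_W :: "nat \<Rightarrow> 'e set \<Rightarrow> ('e \<Rightarrow> real) \<Rightarrow> ('e \<Rightarrow> nat \<times> nat) \<Rightarrow> (nat \<Rightarrow> real) set" where
  "admissible_W n E l0 ends =
     {w. (\<forall>i. i \<notin> {1..n} \<longrightarrow> w i = 0) \<and>
         (\<forall>e\<in>E. w (fst (ends e)) + w (snd (ends e)) > - ln (cosh (l0 e / 2)))}"

end

theory Submission
  imports Defs
begin


definition Gt :: "real\<Rightarrow>real\<Rightarrow>real\<Rightarrow>real\<Rightarrow>real\<Rightarrow>real\<Rightarrow>real" where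
 "Gt Ta Tb Tc pa pb pc = (2*(Ta+1)*pa + 2*(Tb+1)*pb*Tc + Tb*(2*(Tc+1)*pc)
     - (Ta+Tb*Tc)*(Tb*(2*(Tb+1)*pb)/(Tb^2-1) + Tc*(2*(Tc+1)*pc)/(Tc^2-1)))"

definition Dt :: "real\<Rightarrow>real\<Rightarrow>real\<Rightarrow>real" where
 "Dt Ta Tb Tc = Ta^2+Tb^2+Tc^2+2*Ta*Tb*Tc - 1"

lemma polyid:
  fixes e0 e1 e2 z0 z1 z2 :: real
  shows "- ( ((e1*z1+e2*z2-e0*z0)/2) * (4*(1+e0)*e0*z0 + 4*(1+2*e2)*(1+e1)*e1*z1 + 4*(1+2*e1)*(1+e2)*e2*z2
               - ((1+2*e0)+(1+2*e1)*(1+2*e2))*((1+2*e1)*z1+(1+2*e2)*z2))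
          + ((e2*z2+e0*z0-e1*z1)/2) * (4*(1+e1)*e1*z1 + 4*(1+2*e0)*(1+e2)*e2*z2 + 4*(1+2*e2)*(1+e0)*e0*z0
               - ((1+2*e1)+(1+2*e2)*(1+2*e0))*((1+2*e2)*z2+(1+2*e0)*z0))
          + ((e0*z0+e1*z1-e2*z2)/2) * (4*(1+e2)*e2*z2 + 4*(1+2*e1)*(1+e0)*e0*z0 + 4*(1+2*e0)*(1+e1)*e1*z1
               - ((1+2*e2)+(1+2*e0)*(1+2*e1))*((1+2*e0)*z0+(1+2*e1)*z1)))
   = 2 * ((e0*z0^2+e1*z1^2+e2*z2^2) + (e0*e1*(z0-z1)^2 + e1*e2*(z1-z2)^2 + e0*e2*(z0-z2)^2)
          + 2*(e0^2*z0^2+e1^2*z1^2+e2^2*z2^2)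
          + (e0*(e1*z1+e2*z2-e0*z0)^2 + e1*(e2*z2+e0*z0-e1*z1)^2 + e2*(e0*z0+e1*z1-e2*z2)^2))"
  by (simp add: field_simps power2_eq_square)

lemma Gt_e:
  fixes e0 e1 e2 z0 z1 z2 :: real
  assumes "e1 > 0" "e2 > 0"
  shows "Gt (1+2*e0) (1+2*e1) (1+2*e2) (e0*z0) (e1*z1) (e2*z2) =
     4*(1+e0)*e0*z0 + 4*(1+2*e2)*(1+e1)*e1*z1 + 4*(1+2*e1)*(1+e2)*e2*z2
               - ((1+2*e0)+(1+2*e1)*(1+2*e2))*((1+2*e1)*z1+(1+2*e2)*z2)"
proof -
  have q: "((1+2*e)^2-1) = 4*(e*(1+e))" for e :: real by (simp add: algebra_simps power2_eq_square)
  have r: "(1+2*e)*(2*((1+2*e)+1)*(e*z))/((1+2*e)^2-1) = (1+2*e)*z" if "e > 0" for e z :: real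
  proof -
    have "e*(1+e) \<noteq> 0" using that by simp
    then show ?thesis unfolding q by (simp add: field_simps)
  qed
  have a: "(1+2*e1)*(2*((1+2*e1)+1)*(e1*z1))/((1+2*e1)^2-1) = (1+2*e1)*z1" using r assms by simp
  have b: "(1+2*e2)*(2*((1+2*e2)+1)*(e2*z2))/((1+2*e2)^2-1) = (1+2*e2)*z2" using r assms by simp
  show ?thesis unfolding Gt_def a b by (simp add: algebra_simps)
qed

lemma key_ineq:
  fixes T0 T1 T2 d0 d1 d2 :: real
  assumes "T0 > 1" "T1 > 1" "T2 > 1"
  shows "d0 * Gt T0 T1 T2 (d1+d2) (d2+d0) (d0+d1) + d1 * Gt T1 T2 T0 (d2+d0) (d0+d1) (d1+d2)
         + d2 * Gt T2 T0 T1 (d0+d1) (d1+d2) (d2+d0) \<le> 0"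
    and "(d0,d1,d2) \<noteq> (0,0,0) \<Longrightarrow> d0 * Gt T0 T1 T2 (d1+d2) (d2+d0) (d0+d1) + d1 * Gt T1 T2 T0 (d2+d0) (d0+d1) (d1+d2)
         + d2 * Gt T2 T0 T1 (d0+d1) (d1+d2) (d2+d0) < 0"
proof -
  define e0 e1 e2 where "e0 = (T0-1)/2" and "e1 = (T1-1)/2" and "e2 = (T2-1)/2"
  have ep: "e0 > 0" "e1 > 0" "e2 > 0" using assms by (auto simp: e0_def e1_def e2_def)
  define z0 z1 z2 where "z0 = (d1+d2)/e0" and "z1 = (d2+d0)/e1" and "z2 = (d0+d1)/e2"
  have p: "d1+d2 = e0*z0" "d2+d0 = e1*z1" "d0+d1 = e2*z2" using ep by (auto simp: z0_def z1_def z2_def)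
  have T: "T0 = 1+2*e0" "T1 = 1+2*e1" "T2 = 1+2*e2" by (auto simp: e0_def e1_def e2_def field_simps)
  have d: "d0 = (e1*z1+e2*z2-e0*z0)/2" "d1 = (e2*z2+e0*z0-e1*z1)/2" "d2 = (e0*z0+e1*z1-e2*z2)/2"
    unfolding p[symmetric] by simp_all
  define R where "R = ((e0*z0^2+e1*z1^2+e2*z2^2) + (e0*e1*(z0-z1)^2 + e1*e2*(z1-z2)^2 + e0*e2*(z0-z2)^2)
          + 2*(e0^2*z0^2+e1^2*z1^2+e2^2*z2^2)
          + (e0*(e1*z1+e2*z2-e0*z0)^2 + e1*(e2*z2+e0*z0-e1*z1)^2 + e2*(e0*z0+e1*z1-e2*z2)^2))"
  have eq: "d0 * Gt T0 T1 T2 (d1+d2) (d2+d0) (d0+d1) + d1 * Gt T1 T2 T0 (d2+d0) (d0+d1) (d1+d2)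
         + d2 * Gt T2 T0 T1 (d0+d1) (d1+d2) (d2+d0) = - 2 * R"
  proof -
    have "d0 * Gt T0 T1 T2 (d1+d2) (d2+d0) (d0+d1) + d1 * Gt T1 T2 T0 (d2+d0) (d0+d1) (d1+d2)
         + d2 * Gt T2 T0 T1 (d0+d1) (d1+d2) (d2+d0) =
         d0 * Gt (1+2*e0) (1+2*e1) (1+2*e2) (e0*z0) (e1*z1) (e2*z2)
         + d1 * Gt (1+2*e1) (1+2*e2) (1+2*e0) (e1*z1) (e2*z2) (e0*z0)
         + d2 * Gt (1+2*e2) (1+2*e0) (1+2*e1) (e2*z2) (e0*z0) (e1*z1)"
      unfolding p T by simp
    also have "\<dots> = -2*R" unfolding Gt_e[OF ep(2) ep(3)] Gt_e[OF ep(3) ep(1)] Gt_e[OF ep(1) ep(2)]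
      unfolding d R_def using polyid[of e1 z1 e2 z2 e0 z0] by (simp add: algebra_simps)
    finally show ?thesis .
  qed
  have n1: "0 \<le> (e0*e1*(z0-z1)^2 + e1*e2*(z1-z2)^2 + e0*e2*(z0-z2)^2)"
    using ep by (intro add_nonneg_nonneg mult_nonneg_nonneg) auto
  have n2: "0 \<le> 2*(e0^2*z0^2+e1^2*z1^2+e2^2*z2^2)"
    using ep by (intro add_nonneg_nonneg mult_nonneg_nonneg) auto
  have n3: "0 \<le> (e0*(e1*z1+e2*z2-e0*z0)^2 + e1*(e2*z2+e0*z0-e1*z1)^2 + e2*(e0*z0+e1*z1-e2*z2)^2)"
    using ep by (intro add_nonneg_nonneg mult_nonneg_nonneg) auto
  have R1: "R \<ge> e0*z0^2+e1*z1^2+e2*z2^2" unfolding R_def using n1 n2 n3 by linarith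
  have "e0*z0^2+e1*z1^2+e2*z2^2 \<ge> 0" using ep by (intro add_nonneg_nonneg mult_nonneg_nonneg) auto
  then show "d0 * Gt T0 T1 T2 (d1+d2) (d2+d0) (d0+d1) + d1 * Gt T1 T2 T0 (d2+d0) (d0+d1) (d1+d2)
         + d2 * Gt T2 T0 T1 (d0+d1) (d1+d2) (d2+d0) \<le> 0" using eq R1 by linarith
  assume nz: "(d0,d1,d2) \<noteq> (0,0,0)"
  have "z0 \<noteq> 0 \<or> z1 \<noteq> 0 \<or> z2 \<noteq> 0"
  proof (rule ccontr)
    assume "\<not> ?thesis"
    then have "d1+d2 = 0" "d2+d0 = 0" "d0+d1 = 0" using p by auto
    then show False using nz by auto
  qed
  moreover have "e0*z0^2 \<ge> 0" "e1*z1^2 \<ge> 0" "e2*z2^2 \<ge> 0" using ep by auto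
  moreover have "z0 \<noteq> 0 \<Longrightarrow> e0*z0^2 > 0" "z1 \<noteq> 0 \<Longrightarrow> e1*z1^2 > 0" "z2 \<noteq> 0 \<Longrightarrow> e2*z2^2 > 0"
    using ep by auto
  ultimately have "e0*z0^2+e1*z1^2+e2*z2^2 > 0" by linarith
  then show "d0 * Gt T0 T1 T2 (d1+d2) (d2+d0) (d0+d1) + d1 * Gt T1 T2 T0 (d2+d0) (d0+d1) (d1+d2)
         + d2 * Gt T2 T0 T1 (d0+d1) (d1+d2) (d2+d0) < 0" using eq R1 by linarith
qed



definition ylen :: "real \<Rightarrow> real \<Rightarrow> real \<Rightarrow> real \<Rightarrow> real" where
  "ylen s p C x = exp (s + x*p) * C"
definition tfun :: "real \<Rightarrow> real \<Rightarrow> real \<Rightarrow> real \<Rightarrow> real" where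
  "tfun s p C x = 2 * (ylen s p C x)^2 - 1"

lemma cosh2arcosh: "(y::real) \<ge> 1 \<Longrightarrow> cosh (2*arcosh y) = 2*y^2-1"
  by (simp add: cosh_double_cosh)

lemma sinh2arcosh: "(y::real) \<ge> 1 \<Longrightarrow> sinh (2*arcosh y) = sqrt ((2*y^2-1)^2-1)"
proof -
  assume y: "y \<ge> 1"
  have "sinh (2*arcosh y) = 2*y* sqrt(y^2-1)"
    using y by (simp add: sinh_double sinh_arcosh_real)
  also have "\<dots> = sqrt ((2*y^2-1)^2-1)"
  proof (rule real_sqrt_unique[symmetric])
    have "(sqrt (y^2-1))^2 = y^2-1" using y by (simp add: one_le_power)
    then show "(2*y* sqrt(y^2-1))^2 = (2*y^2-1)^2-1"
      by (simp add: power_mult_distrib algebra_simps power2_eq_square)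
    show "0 \<le> 2*y* sqrt(y^2-1)" using y by (simp add: one_le_power)
  qed
  finally show ?thesis .
qed

lemma tfun_deriv: "(tfun s p C has_real_derivative 2*(tfun s p C x + 1)*p) (at x)"
  unfolding tfun_def ylen_def
  by (auto intro!: derivative_eq_intros simp: power2_eq_square algebra_simps)

lemma Dt_pos: "Ta > 1 \<Longrightarrow> Tb > 1 \<Longrightarrow> Tc > 1 \<Longrightarrow> Dt Ta Tb Tc > 0"
proof -
  assume a: "Ta > 1" "Tb > 1" "Tc > 1"
  have "Ta^2 > 1" "Tb^2 > 0" "Tc^2 > 0" using a by (auto simp: one_less_power)
  moreover have "Ta*Tb*Tc > 0" using a by simp
  ultimately show ?thesis unfolding Dt_def by linarith
qed

lemma val_alg:
  fixes rM rD bb cc X N E b c dB dC :: real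
  assumes "rM > 0" "rD > 0" "bb > 0" "cc > 0" "rM*rM = bb*cc"
  shows "(1 / (rD/rM)) * ((X * rM - N * ((2*b*dB*cc + bb*(2*c*dC)) * (inverse rM / 2))) / (rM*rM))
     = (X - N*(b*dB/bb + c*dC/cc)) / rD"
proof -
  have "(1 / (rD/rM)) * ((X * rM - N * ((2*b*dB*cc + bb*(2*c*dC)) * (inverse rM / 2))) / (rM*rM))
     = (X*(rM*rM) - N*(2*b*dB*cc + bb*(2*c*dC))/2) / (rD*(rM*rM))"
    using assms by (simp add: field_simps)
  also have "\<dots> = (X - N*(b*dB/bb + c*dC/cc)) / rD" unfolding assms(5)
    using assms by (simp add: field_simps)
  finally show ?thesis .
qed

lemma arcosh_F_deriv:
  fixes Ta Tb Tc :: "real \<Rightarrow> real" and t :: real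
  assumes dA: "(Ta has_real_derivative dA) (at t)" and dB: "(Tb has_real_derivative dB) (at t)"
      and dC: "(Tc has_real_derivative dC) (at t)"
      and g: "Ta t > 1" "Tb t > 1" "Tc t > 1"
  shows "((\<lambda>x. arcosh ((Ta x + Tb x * Tc x) / sqrt ((Tb x ^2 - 1) * (Tc x ^2 - 1))))
          has_real_derivative
         (dA + dB*Tc t + Tb t*dC - (Ta t+Tb t*Tc t)*(Tb t*dB/(Tb t^2-1) + Tc t*dC/(Tc t^2-1)))
           / sqrt (Dt (Ta t) (Tb t) (Tc t))) (at t)"
proof -
  define a b c where "a = Ta t" and "b = Tb t" and "c = Tc t"
  have ab: "a > 1" "b > 1" "c > 1" using g by (auto simp: a_def b_def c_def)
  define M where "M = (b^2-1)*(c^2-1)"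
  define N where "N = a + b*c"
  define D where "D = Dt a b c"
  have b2: "b^2 - 1 > 0" "c^2 - 1 > 0" using ab by (auto simp: one_less_power)
  have Mp: "M > 0" unfolding M_def using b2 by simp
  have Dp: "D > 0" unfolding D_def using Dt_pos ab by simp
  have Np: "N > 0" unfolding N_def using ab mult_pos_pos[of b c] by linarith
  have ND: "N^2 - M = D" unfolding N_def M_def D_def Dt_def by (simp add: algebra_simps power2_eq_square)
  define rM where "rM = sqrt M"
  define rD where "rD = sqrt D"
  have rM: "rM > 0" "rM^2 = M" using Mp by (auto simp: rM_def)
  have rD: "rD > 0" "rD^2 = D" using Dp by (auto simp: rD_def)
  have NgM: "N > rM"
  proof -
    have "rM^2 < N^2" using rM ND Dp by linarith
    then show ?thesis using Np by (meson power_less_imp_less_base less_imp_le)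
  qed
  have F1: "N / rM > 1" using NgM rM by simp
  have sqF: "sqrt ((N/rM)^2 - 1) = rD / rM"
  proof (rule real_sqrt_unique)
    show "(rD/rM)^2 = (N/rM)^2 - 1" using rM rD ND Mp by (simp add: power_divide field_simps)
    show "0 \<le> rD/rM" using rM rD by simp
  qed
  have dM: "((\<lambda>x. (Tb x ^2 - 1) * (Tc x ^2 - 1)) has_real_derivative
          (2*b*dB)*(c^2-1) + (b^2-1)*(2*c*dC)) (at t)"
    unfolding b_def c_def
    by (auto intro!: derivative_eq_intros dB dC simp: power2_eq_square algebra_simps)
  have dsM: "((\<lambda>x. sqrt ((Tb x ^2 - 1) * (Tc x ^2 - 1))) has_real_derivative
          ((2*b*dB)*(c^2-1) + (b^2-1)*(2*c*dC)) * (inverse rM / 2)) (at t)"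
    using DERIV_chain2[OF DERIV_real_sqrt dM] Mp unfolding M_def rM_def b_def c_def by (simp add: mult.commute)
  have dN: "((\<lambda>x. Ta x + Tb x * Tc x) has_real_derivative dA + (dB*c + b*dC)) (at t)"
    unfolding b_def c_def by (auto intro!: derivative_eq_intros dA dB dC)
  have dF: "((\<lambda>x. (Ta x + Tb x * Tc x) / sqrt ((Tb x ^2 - 1) * (Tc x ^2 - 1))) has_real_derivative
          ((dA + (dB*c + b*dC)) * rM - N * (((2*b*dB)*(c^2-1) + (b^2-1)*(2*c*dC)) * (inverse rM / 2))) / (rM*rM)) (at t)"
  proof -
    have gt: "sqrt ((Tb t ^2 - 1) * (Tc t ^2 - 1)) = rM" unfolding rM_def M_def b_def c_def ..
    have ft: "Ta t + Tb t * Tc t = N" unfolding N_def a_def b_def c_def ..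
    show ?thesis by (rule DERIV_divide[OF dN dsM, unfolded gt ft]) (use rM in simp)
  qed
  have dAr: "(arcosh has_real_derivative 1 / sqrt ((N/rM)^2 - 1)) (at (N/rM))"
    by (rule arcosh_real_has_field_derivative[OF F1])
  have eqF: "(Ta t + Tb t * Tc t) / sqrt ((Tb t ^2 - 1) * (Tc t ^2 - 1)) = N / rM"
    unfolding N_def rM_def M_def a_def b_def c_def ..
  have main: "((\<lambda>x. arcosh ((Ta x + Tb x * Tc x) / sqrt ((Tb x ^2 - 1) * (Tc x ^2 - 1))))
          has_real_derivative (1 / sqrt ((N/rM)^2 - 1)) *
          (((dA + (dB*c + b*dC)) * rM - N * (((2*b*dB)*(c^2-1) + (b^2-1)*(2*c*dC)) * (inverse rM / 2))) / (rM*rM))) (at t)"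
  proof -
    have dAr': "(arcosh has_real_derivative 1 / sqrt ((N/rM)^2 - 1)) (at ((Ta t + Tb t * Tc t) / sqrt ((Tb t ^2 - 1) * (Tc t ^2 - 1))))"
      unfolding eqF by (rule dAr)
    show ?thesis by (rule DERIV_chain2[OF dAr' dF])
  qed
  have val: "(1 / sqrt ((N/rM)^2 - 1)) *
          (((dA + (dB*c + b*dC)) * rM - N * (((2*b*dB)*(c^2-1) + (b^2-1)*(2*c*dC)) * (inverse rM / 2))) / (rM*rM))
       = (dA + dB*c + b*dC - N*(b*dB/(b^2-1) + c*dC/(c^2-1))) / rD"
    unfolding sqF using val_alg[OF rM(1) rD(1) b2] rM(2) unfolding M_def by (simp add: power2_eq_square)
  show ?thesis using main unfolding val unfolding rD_def D_def N_def a_def b_def c_def .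
qed



lemma tfun_gt: "ylen s p C x > 1 \<Longrightarrow> tfun s p C x > 1"
  unfolding tfun_def
proof -
  assume "ylen s p C x > 1"
  then have "(ylen s p C x)^2 > 1" by (simp add: one_less_power)
  then show "2 * (ylen s p C x)^2 - 1 > 1" by simp
qed

lemma hex_eq:
  assumes "ya \<ge> 1" "yb \<ge> 1" "yc \<ge> 1"
  shows "hex_side (2*arcosh ya) (2*arcosh yb) (2*arcosh yc) =
     arcosh (((2*ya^2-1) + (2*yb^2-1)*(2*yc^2-1)) / sqrt (((2*yb^2-1)^2-1)*((2*yc^2-1)^2-1)))"
  unfolding hex_side_def using assms by (simp add: cosh2arcosh sinh2arcosh real_sqrt_mult)

lemma hex_deriv:
  assumes ga: "ylen sa pa Ca t > 1" and gb: "ylen sb pb Cb t > 1" and gc: "ylen sc pc Cc t > 1"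
  shows "((\<lambda>x. hex_side (2*arcosh(ylen sa pa Ca x)) (2*arcosh(ylen sb pb Cb x)) (2*arcosh(ylen sc pc Cc x)))
     has_real_derivative Gt (tfun sa pa Ca t) (tfun sb pb Cb t) (tfun sc pc Cc t) pa pb pc
        / sqrt (Dt (tfun sa pa Ca t) (tfun sb pb Cb t) (tfun sc pc Cc t))) (at t)"
proof -
  have d: "((\<lambda>x. arcosh ((tfun sa pa Ca x + tfun sb pb Cb x * tfun sc pc Cc x) /
         sqrt ((tfun sb pb Cb x ^2 - 1) * (tfun sc pc Cc x ^2 - 1))))
     has_real_derivative Gt (tfun sa pa Ca t) (tfun sb pb Cb t) (tfun sc pc Cc t) pa pb pc
        / sqrt (Dt (tfun sa pa Ca t) (tfun sb pb Cb t) (tfun sc pc Cc t))) (at t)"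
    unfolding Gt_def
    by (rule arcosh_F_deriv[OF tfun_deriv tfun_deriv tfun_deriv tfun_gt[OF ga] tfun_gt[OF gb] tfun_gt[OF gc]])
  define S where "S = {x. 1 < ylen sa pa Ca x} \<inter> {x. 1 < ylen sb pb Cb x} \<inter> {x. 1 < ylen sc pc Cc x}"
  have cont: "continuous_on UNIV (ylen s p C)" for s p C
    unfolding ylen_def by (intro continuous_intros)
  have "open S" unfolding S_def
    by (intro open_Int open_Collect_less continuous_on_const cont)
  moreover have "t \<in> S" using ga gb gc by (simp add: S_def)
  moreover have "\<And>x. x \<in> S \<Longrightarrow> arcosh ((tfun sa pa Ca x + tfun sb pb Cb x * tfun sc pc Cc x) /
         sqrt ((tfun sb pb Cb x ^2 - 1) * (tfun sc pc Cc x ^2 - 1))) =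
      hex_side (2*arcosh(ylen sa pa Ca x)) (2*arcosh(ylen sb pb Cb x)) (2*arcosh(ylen sc pc Cc x))"
    unfolding S_def tfun_def by (subst hex_eq) auto
  ultimately show ?thesis by (rule has_field_derivative_transform_within_open[OF d])
qed



lemma mset2_sum:
  assumes "{#a, b#} = {#c, d#}"
  shows "h a + h b = (h c + h d :: real)"
proof -
  have "sum_mset (image_mset h {#a, b#}) = sum_mset (image_mset h {#c, d#})" using assms by simp
  then show ?thesis by (simp add: add.commute)
qed

lemma sumB:
  assumes "finite F" "\<forall>f\<in>F. \<forall>k<3. fv f k \<in> {1..n}"
  shows "(\<Sum>i\<in>{1..n}. u i * Bcurv F fv fe l0 ends i w) =
         (\<Sum>f\<in>F. \<Sum>k<3. u (fv f k) * corner_theta fe l0 ends w f k)"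
proof -
  define h where "h = (\<lambda>(f,k). u (fv f k) * corner_theta fe l0 ends w f k)"
  have "(\<Sum>i\<in>{1..n}. u i * Bcurv F fv fe l0 ends i w) =
        (\<Sum>i\<in>{1..n}. sum h {x. x \<in> F \<times> {..<3} \<and> (\<lambda>(f,k). fv f k) x = i})"
  proof (rule sum.cong[OF refl])
    fix i assume "i \<in> {1..n}"
    have set: "{(f,k). f \<in> F \<and> k < 3 \<and> fv f k = i} = {x. x \<in> F \<times> {..<3} \<and> (\<lambda>(f,k). fv f k) x = i}"
      by auto
    have "u i * Bcurv F fv fe l0 ends i w = (\<Sum>x\<in>{(f,k). f \<in> F \<and> k < 3 \<and> fv f k = i}. u i * (\<lambda>(f,k). corner_theta fe l0 ends w f k) x)"
      unfolding Bcurv_def by (simp add: sum_distrib_left)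
    also have "\<dots> = (\<Sum>x\<in>{(f,k). f \<in> F \<and> k < 3 \<and> fv f k = i}. h x)"
      by (rule sum.cong[OF refl]) (auto simp: h_def)
    finally show "u i * Bcurv F fv fe l0 ends i w = sum h {x. x \<in> F \<times> {..<3} \<and> (\<lambda>(f,k). fv f k) x = i}"
      unfolding set .
  qed
  also have "\<dots> = sum h (F \<times> {..<3})"
    by (rule sum.group) (use assms in auto)
  also have "\<dots> = (\<Sum>f\<in>F. \<Sum>k<3. u (fv f k) * corner_theta fe l0 ends w f k)"
    unfolding sum.cartesian_product h_def ..
  finally show ?thesis .
qed

lemma sum3: "(\<Sum>k<(3::nat). g k) = g 0 + g 1 + (g 2 :: real)"
  by (simp add: numeral_3_eq_3 numeral_2_eq_2 lessThan_Suc add.commute add.left_commute)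

lemma Dt_rot: "Dt b c a = Dt a b c" "Dt c a b = Dt a b c"
  unfolding Dt_def by (simp_all add: algebra_simps)



theorem proposition3p3:
  fixes n :: nat and F :: "'f set" and E :: "'e set"
    and fv :: "'f \<Rightarrow> nat \<Rightarrow> nat" and fe :: "'f \<Rightarrow> nat \<Rightarrow> 'e"
    and ends :: "'e \<Rightarrow> nat \<times> nat" and l0 :: "'e \<Rightarrow> real"
  assumes "closed_triangulation n F E fv fe ends"
    and "\<forall>e\<in>E. l0 e > 0"
  shows "inj_on (\<lambda>w. \<lambda>i\<in>{1..n}. Bcurv F fv fe l0 ends i w) (admissible_W n E l0 ends)"
proof (rule inj_onI, rule ccontr)
  fix w1 w2 assume w1: "w1 \<in> admissible_W n E l0 ends" and w2: "w2 \<in> admissible_W n E l0 ends"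
    and Beq: "(\<lambda>i\<in>{1..n}. Bcurv F fv fe l0 ends i w1) = (\<lambda>i\<in>{1..n}. Bcurv F fv fe l0 ends i w2)"
    and ne: "w1 \<noteq> w2"
  note ct = assms(1)[unfolded closed_triangulation_def]
  have finF: "finite F" using ct by blast
  have fvin: "\<forall>f\<in>F. \<forall>k<3. fv f k \<in> {1..n}" using ct by blast
  have fein: "\<And>f k. f \<in> F \<Longrightarrow> k < 3 \<Longrightarrow> fe f k \<in> E" using ct by blast
  have msf: "\<And>f k. f \<in> F \<Longrightarrow> k < 3 \<Longrightarrow>
     {# fst (ends (fe f k)), snd (ends (fe f k)) #} = {# fv f ((k+1) mod 3), fv f ((k+2) mod 3) #}"
    using ct by blast
  have cover: "\<forall>i\<in>{1..n}. \<exists>f\<in>F. \<exists>k<3. fv f k = i" using ct by blast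
  define u where "u = (\<lambda>i. w2 i - w1 i)"
  define Wt where "Wt = (\<lambda>t i. w1 i + t * u i)"
  define \<sigma> where "\<sigma> = (\<lambda>e. w1 (fst (ends e)) + w1 (snd (ends e)))"
  define \<pi> where "\<pi> = (\<lambda>e. u (fst (ends e)) + u (snd (ends e)))"
  define Cc where "Cc = (\<lambda>e. cosh (l0 e / 2))"
  define th where "th = (\<lambda>f k t. hex_side (2*arcosh(ylen (\<sigma>(fe f k)) (\<pi>(fe f k)) (Cc(fe f k)) t))
       (2*arcosh(ylen (\<sigma>(fe f ((k+1) mod 3))) (\<pi>(fe f ((k+1) mod 3))) (Cc(fe f ((k+1) mod 3))) t))
       (2*arcosh(ylen (\<sigma>(fe f ((k+2) mod 3))) (\<pi>(fe f ((k+2) mod 3))) (Cc(fe f ((k+2) mod 3))) t)))"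
  define T where "T = (\<lambda>f m t. tfun (\<sigma>(fe f m)) (\<pi>(fe f m)) (Cc(fe f m)) t)"
  have th_eq: "corner_theta fe l0 ends (Wt t) f k = th f k t" for f k t
    unfolding corner_theta_def conf_length_def Let_def th_def ylen_def Wt_def \<sigma>_def \<pi>_def Cc_def
    by (simp add: algebra_simps)
  have W0: "Wt 0 = w1" and W1: "Wt 1 = w2" by (auto simp: Wt_def u_def)
  have ypos: "ylen (\<sigma> e) (\<pi> e) (Cc e) t > 1" if e: "e \<in> E" and t: "0 \<le> t" "t \<le> 1" for e t
  proof -
    have C1: "Cc e \<ge> 1" unfolding Cc_def by (rule cosh_real_ge_1)
    have a1: "\<sigma> e > - ln (Cc e)" using w1 e unfolding admissible_W_def \<sigma>_def Cc_def by auto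
    have a2: "\<sigma> e + \<pi> e > - ln (Cc e)" using w2 e unfolding admissible_W_def \<sigma>_def \<pi>_def Cc_def u_def by auto
    have "\<sigma> e + t * \<pi> e = (1-t) * \<sigma> e + t * (\<sigma> e + \<pi> e)" by (simp add: algebra_simps)
    also have "\<dots> > (1-t) * (- ln (Cc e)) + t * (- ln (Cc e))"
    proof (cases "t = 0")
      case True then show ?thesis using a1 by simp
    next
      case False
      then have "t > 0" using t by simp
      then have "t * (\<sigma> e + \<pi> e) > t * (- ln (Cc e))" using mult_strict_left_mono[OF a2] by blast
      moreover have "(1-t) * \<sigma> e \<ge> (1-t) * (- ln (Cc e))" using a1 t by (intro mult_left_mono) auto
      ultimately show ?thesis by linarith
    qed
    finally have "\<sigma> e + t * \<pi> e > - ln (Cc e)" by (simp add: algebra_simps)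
    then have "exp (\<sigma> e + t * \<pi> e) > exp (- ln (Cc e))" by simp
    also have "exp (- ln (Cc e)) = 1 / Cc e" using C1 by (simp add: exp_minus inverse_eq_divide)
    finally have "exp (\<sigma> e + t * \<pi> e) * Cc e > 1 / Cc e * Cc e" using C1 by (intro mult_strict_right_mono) auto
    then show ?thesis using C1 by (simp add: ylen_def mult.commute)
  qed
  have thd: "(th f k has_real_derivative
        Gt (T f k t) (T f ((k+1) mod 3) t) (T f ((k+2) mod 3) t)
           (\<pi>(fe f k)) (\<pi>(fe f ((k+1) mod 3))) (\<pi>(fe f ((k+2) mod 3)))
         / sqrt (Dt (T f k t) (T f ((k+1) mod 3) t) (T f ((k+2) mod 3) t))) (at t)"
    if f: "f \<in> F" and k: "k < 3" and t: "0 \<le> t" "t \<le> 1" for f k t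
    unfolding th_def T_def
    by (rule hex_deriv) (use f k t fein ypos in auto)
  have pi_eq: "\<pi> (fe f k) = u (fv f ((k+1) mod 3)) + u (fv f ((k+2) mod 3))" if "f \<in> F" "k < 3" for f k
    unfolding \<pi>_def using mset2_sum[OF msf[OF that]] .
  have Tgt: "T f m t > 1" if "f \<in> F" "m < 3" "0 \<le> t" "t \<le> 1" for f m t
    unfolding T_def using tfun_gt ypos fein that by blast
  define Phi where "Phi = (\<lambda>f t. (\<Sum>k<3. u (fv f k) * th f k t))"
  define Phi' where "Phi' = (\<lambda>f t.
      (u (fv f 0) * Gt (T f 0 t) (T f 1 t) (T f 2 t) (u (fv f 1) + u (fv f 2)) (u (fv f 2) + u (fv f 0)) (u (fv f 0) + u (fv f 1))
     + u (fv f 1) * Gt (T f 1 t) (T f 2 t) (T f 0 t) (u (fv f 2) + u (fv f 0)) (u (fv f 0) + u (fv f 1)) (u (fv f 1) + u (fv f 2))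
     + u (fv f 2) * Gt (T f 2 t) (T f 0 t) (T f 1 t) (u (fv f 0) + u (fv f 1)) (u (fv f 1) + u (fv f 2)) (u (fv f 2) + u (fv f 0)))
     / sqrt (Dt (T f 0 t) (T f 1 t) (T f 2 t)))"
  have Phid: "((\<lambda>t. Phi f t) has_real_derivative Phi' f t) (at t)"
    if f: "f \<in> F" and t: "0 \<le> t" "t \<le> 1" for f t
  proof -
    have d0: "(th f 0 has_real_derivative
        Gt (T f 0 t) (T f 1 t) (T f 2 t) (u (fv f 1) + u (fv f 2)) (u (fv f 2) + u (fv f 0)) (u (fv f 0) + u (fv f 1))
        / sqrt (Dt (T f 0 t) (T f 1 t) (T f 2 t))) (at t)"
      using thd[OF f _ t, of 0] pi_eq[OF f, of 0] pi_eq[OF f, of 1] pi_eq[OF f, of 2] by (simp add: numeral_2_eq_2)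
    have d1: "(th f 1 has_real_derivative
        Gt (T f 1 t) (T f 2 t) (T f 0 t) (u (fv f 2) + u (fv f 0)) (u (fv f 0) + u (fv f 1)) (u (fv f 1) + u (fv f 2))
        / sqrt (Dt (T f 0 t) (T f 1 t) (T f 2 t))) (at t)"
      using thd[OF f _ t, of 1] pi_eq[OF f, of 0] pi_eq[OF f, of 1] pi_eq[OF f, of 2] by (simp add: Dt_rot numeral_2_eq_2)
    have d2: "(th f 2 has_real_derivative
        Gt (T f 2 t) (T f 0 t) (T f 1 t) (u (fv f 0) + u (fv f 1)) (u (fv f 1) + u (fv f 2)) (u (fv f 2) + u (fv f 0))
        / sqrt (Dt (T f 0 t) (T f 1 t) (T f 2 t))) (at t)"
      using thd[OF f _ t, of 2] pi_eq[OF f, of 0] pi_eq[OF f, of 1] pi_eq[OF f, of 2] by (simp add: Dt_rot numeral_2_eq_2)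
    have dd: "((\<lambda>t. u (fv f 0) * th f 0 t + u (fv f 1) * th f 1 t + u (fv f 2) * th f 2 t) has_real_derivative
        u (fv f 0) * (Gt (T f 0 t) (T f 1 t) (T f 2 t) (u (fv f 1) + u (fv f 2)) (u (fv f 2) + u (fv f 0)) (u (fv f 0) + u (fv f 1))
        / sqrt (Dt (T f 0 t) (T f 1 t) (T f 2 t)))
      + u (fv f 1) * (Gt (T f 1 t) (T f 2 t) (T f 0 t) (u (fv f 2) + u (fv f 0)) (u (fv f 0) + u (fv f 1)) (u (fv f 1) + u (fv f 2))
        / sqrt (Dt (T f 0 t) (T f 1 t) (T f 2 t)))
      + u (fv f 2) * (Gt (T f 2 t) (T f 0 t) (T f 1 t) (u (fv f 0) + u (fv f 1)) (u (fv f 1) + u (fv f 2)) (u (fv f 2) + u (fv f 0))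
        / sqrt (Dt (T f 0 t) (T f 1 t) (T f 2 t)))) (at t)"
      by (intro DERIV_add DERIV_cmult d0 d1 d2)
    have "((\<lambda>t. u (fv f 0) * th f 0 t + u (fv f 1) * th f 1 t + u (fv f 2) * th f 2 t) has_real_derivative Phi' f t) (at t)"
      using dd unfolding Phi'_def add_divide_distrib by simp
    then show ?thesis unfolding Phi_def sum3 .
  qed
  have Phi'_le: "Phi' f t \<le> 0" if f: "f \<in> F" and t: "0 \<le> t" "t \<le> 1" for f t
    unfolding Phi'_def
    by (intro divide_nonpos_nonneg key_ineq(1) Tgt[OF f _ t] real_sqrt_ge_zero less_imp_le[OF Dt_pos]) auto
  have Phi'_lt: "Phi' f t < 0" if f: "f \<in> F" and t: "0 \<le> t" "t \<le> 1" and nz: "\<exists>k<3. u (fv f k) \<noteq> 0" for f t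
  proof -
    have nz3: "(u (fv f 0), u (fv f 1), u (fv f 2)) \<noteq> (0,0,0)"
      using nz by (auto simp: less_Suc_eq numeral_3_eq_3 numeral_2_eq_2)
    show ?thesis unfolding Phi'_def
      by (intro divide_neg_pos key_ineq(2) Tgt[OF f _ t] nz3 real_sqrt_gt_zero Dt_pos) auto
  qed
  define g where "g = (\<lambda>t. \<Sum>f\<in>F. Phi f t)"
  have gWt: "g t = (\<Sum>i\<in>{1..n}. u i * Bcurv F fv fe l0 ends i (Wt t))" for t
    unfolding g_def Phi_def sumB[OF finF fvin] th_eq ..
  have "g 0 = g 1"
  proof -
    have "Bcurv F fv fe l0 ends i w1 = Bcurv F fv fe l0 ends i w2" if "i \<in> {1..n}" for i
      using fun_cong[OF Beq, of i] that by simp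
    then show ?thesis unfolding gWt W0 W1 by (intro sum.cong) auto
  qed
  moreover have "g 0 > g 1"
  proof (rule DERIV_neg_imp_decreasing[of 0 1 g])
    fix t :: real assume t: "0 \<le> t" "t \<le> 1"
    obtain i0 where i0: "u i0 \<noteq> 0"
      using ne unfolding u_def by (metis (no_types) ext eq_iff_diff_eq_0)
    have i0n: "i0 \<in> {1..n}"
    proof (rule ccontr)
      assume "i0 \<notin> {1..n}"
      then have "w1 i0 = 0" "w2 i0 = 0" using w1 w2 unfolding admissible_W_def by auto
      then show False using i0 unfolding u_def by simp
    qed
    obtain f0 k0 where f0: "f0 \<in> F" "k0 < 3" "fv f0 k0 = i0" using cover i0n by blast
    have "(g has_real_derivative (\<Sum>f\<in>F. Phi' f t)) (at t)"
      unfolding g_def by (rule DERIV_sum) (rule Phid[OF _ t], simp)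
    moreover have "(\<Sum>f\<in>F. Phi' f t) < (\<Sum>f\<in>F. 0)"
    proof (rule sum_strict_mono_ex1[OF finF])
      show "\<forall>f\<in>F. Phi' f t \<le> 0" using Phi'_le t by blast
      show "\<exists>f\<in>F. Phi' f t < 0" using Phi'_lt[OF f0(1) t] f0 i0 by blast
    qed
    ultimately show "\<exists>y. (g has_real_derivative y) (at t) \<and> y < 0" by auto
  qed simp
  ultimately show False by simp
qed

end
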